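(* Let $I, I_1, I_2, \dots$ be IID $\mathbb{Z}$-valued random variables with $E I_- < E I_+ < \infty$. Let $U_1, U_2, \dots$ be IID $U[0,1]$ random variables, independent of $(I_n)$. Set $S_{n,+} := \sum_{0<j\le n} (I_j)_+$ and $S_{n,-} := \sum_{0<j\le n} (I_j)_-$. For $f \in [0,1]$ and $n \in \mathbb{Z}_+$, define $$S_n(f) := \sum_{0<j\le S_{n,+}} \mathbf{1}_{[0,f]}(U_j) - S_{n,-}, \qquad M_n(f) := \min\bigl(0, S_1(f), \dots, S_n(f)\bigr),$$ $$C_{n+1}(f) := \sum_{S_{n,+} < j \le S_{n+1,+}} \mathbf{1}_{[0,f]}(U_j),$$ $$L_0(f) := 0, \qquad L_{n+1}(f) := L_n(f) + \max\bigl(C_{n+1}(f) - (I_{n+1})_-,\, -L_n(f)\bigr).$$ Let $f_c := E I_- / E I_+$. Then for every $f \in [0,1]$: 1. $\lim_{n\to\infty} L_n(f)/n = (f - f_c)_+\, E I_+$ almost surely; 2. $\lim_{n\to\infty} M_n(f)/n = -(f - f_c)_-\, E I_+$ almost surely.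
   Context: $x_+ := \max(x,0)$ and $x_- := -\min(x,0)$. Empty sums are $0$. *)

theory Defs
  imports "HOL-Probability.Probability"
begin

definition ipos :: "int \<Rightarrow> nat" where "ipos x = nat (max x 0)"
definition ineg :: "int \<Rightarrow> nat" where "ineg x = nat (- min x 0)"

definition Splus :: "(nat \<Rightarrow> 'a \<Rightarrow> int) \<Rightarrow> nat \<Rightarrow> 'a \<Rightarrow> nat" where
  "Splus I n \<omega> = (\<Sum>j\<in>{1..n}. ipos (I j \<omega>))"
definition Sminus :: "(nat \<Rightarrow> 'a \<Rightarrow> int) \<Rightarrow> nat \<Rightarrow> 'a \<Rightarrow> nat" where
  "Sminus I n \<omega> = (\<Sum>j\<in>{1..n}. ineg (I j \<omega>))"

definition Sf :: "(nat \<Rightarrow> 'a \<Rightarrow> int) \<Rightarrow> (nat \<Rightarrow> 'a \<Rightarrow> real) \<Rightarrow> real \<Rightarrow> nat \<Rightarrow> 'a \<Rightarrow> real" where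
  "Sf I U f n \<omega> = (\<Sum>j\<in>{1..Splus I n \<omega>}. indicator {0..f} (U j \<omega>)) - real (Sminus I n \<omega>)"

definition Mf :: "(nat \<Rightarrow> 'a \<Rightarrow> int) \<Rightarrow> (nat \<Rightarrow> 'a \<Rightarrow> real) \<Rightarrow> real \<Rightarrow> nat \<Rightarrow> 'a \<Rightarrow> real" where
  "Mf I U f n \<omega> = Min (insert 0 ((\<lambda>k. Sf I U f k \<omega>) ` {1..n}))"

definition Cf :: "(nat \<Rightarrow> 'a \<Rightarrow> int) \<Rightarrow> (nat \<Rightarrow> 'a \<Rightarrow> real) \<Rightarrow> real \<Rightarrow> nat \<Rightarrow> 'a \<Rightarrow> real" where
  "Cf I U f n \<omega> = (\<Sum>j\<in>{Splus I n \<omega><..Splus I (Suc n) \<omega>}. indicator {0..f} (U j \<omega>))"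

text \<open>L_n(f); note Cf I U f n is C_{n+1}(f).\<close>
fun Lf :: "(nat \<Rightarrow> 'a \<Rightarrow> int) \<Rightarrow> (nat \<Rightarrow> 'a \<Rightarrow> real) \<Rightarrow> real \<Rightarrow> nat \<Rightarrow> 'a \<Rightarrow> real" where
  "Lf I U f 0 \<omega> = 0"
| "Lf I U f (Suc n) \<omega> = Lf I U f n \<omega> +
     max (Cf I U f n \<omega> - real (ineg (I (Suc n) \<omega>))) (- Lf I U f n \<omega>)"

end

theory Submission
  imports Defs
begin

lemma geo_bound1:
  fixes x :: real and j :: nat
  assumes "x \<ge> 0" "j \<ge> 1"
  shows "(\<Sum>m<N. if real j * 2^m < x then real j * 2^m else 0) \<le> 2 * x"
proof -
  have "(\<Sum>m<N. if real j * 2^m < x then real j * 2^m else 0) \<le> real j * 2^N - j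
     \<and> (\<Sum>m<N. if real j * 2^m < x then real j * 2^m else 0) \<le> 2 * x"
  proof (induction N)
    case 0 then show ?case using assms by simp
  next
    case (Suc N)
    show ?case
    proof (cases "real j * 2^N < x")
      case True
      then show ?thesis using Suc by auto
    next
      case False
      have e: "real j * 2^N \<ge> 0" "real j * (2 * 2^N) = 2 * (real j * 2^N)" by simp_all
      have s: "(\<Sum>m<Suc N. if real j * 2^m < x then real j * 2^m else 0) = (\<Sum>m<N. if real j * 2^m < x then real j * 2^m else 0)"
        using False by simp
      have e2: "real j * 2^Suc N = 2 * (real j * 2^N)" by simp
      show ?thesis unfolding s using Suc.IH e e2 by (elim conjE; intro conjI; linarith)
    qed
  qed
  then show ?thesis by blast
qed

lemma geo_bound2:
  fixes x :: real and j :: nat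
  assumes "x \<ge> 0" "j \<ge> 1"
  shows "(\<Sum>m<N. if x \<le> real j * 2^m then x^2 / (real j * 2^m) else 0) \<le> 2 * x"
proof -
  let ?k = "\<lambda>m. real j * 2^m"
  have kpos: "?k m > 0" for m using assms by simp
  have H: "(?k N \<le> x \<longrightarrow> (\<Sum>m<N. if x \<le> ?k m then x^2 / ?k m else 0) = 0)
     \<and> (x \<le> ?k N \<longrightarrow> (\<Sum>m<N. if x \<le> ?k m then x^2 / ?k m else 0) \<le> 2*x - 2*x^2 / ?k N)"
  proof (induction N)
    case 0
    have "x \<le> real j \<Longrightarrow> 2*x^2/real j \<le> 2*x" using assms
      by (simp add: power2_eq_square divide_simps mult_left_mono)
    then show ?case using assms by auto
  next
    case (Suc N)
    have kS: "?k (Suc N) = 2 * ?k N" by simp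
    have kN: "?k N > 0" by (rule kpos)
    show ?case
    proof (cases "x \<le> ?k N")
      case True
      have s: "(\<Sum>m<Suc N. if x \<le> ?k m then x^2 / ?k m else 0) = (\<Sum>m<N. if x \<le> ?k m then x^2 / ?k m else 0) + x^2 / ?k N"
        using True by simp
      have A: "(\<Sum>m<N. if x \<le> ?k m then x^2 / ?k m else 0) \<le> 2*x - 2*x^2 / ?k N"
        using Suc True by blast
      have B: "x^2 / ?k N \<le> x" using True kN assms mult_left_mono[OF True assms(1)]
        by (simp add: power2_eq_square divide_simps)
      have "2*x - 2*x^2 / ?k N + x^2 / ?k N = 2*x - 2*x^2/ ?k (Suc N)"
        using kN by (simp add: field_simps)
      then have C: "(\<Sum>m<Suc N. if x \<le> ?k m then x^2 / ?k m else 0) \<le> 2*x - 2*x^2/ ?k (Suc N)"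
        using s A by linarith
      have "\<not> (?k (Suc N) \<le> x) \<or> x = 0 "
        using True kN kS by auto
      then show ?thesis using C s B True by auto
    next
      case False
      have s: "(\<Sum>m<Suc N. if x \<le> ?k m then x^2 / ?k m else 0) = 0"
        using Suc False by simp
      have "x \<le> ?k (Suc N) \<Longrightarrow> 2*x^2/ ?k (Suc N) \<le> 2*x"
      proof -
        assume h: "x \<le> ?k (Suc N)"
        have "x * x \<le> x * ?k (Suc N)" by (rule mult_left_mono[OF h assms(1)])
        then show ?thesis using kpos[of "Suc N"]
          by (simp add: power2_eq_square divide_simps)
      qed
      then show ?thesis using s by auto
    qed
  qed
  have H2: "0 \<le> 2*x^2 / ?k N" using kpos[of N] by simp
  show ?thesis
  proof (cases "x \<le> ?k N")
    case True then show ?thesis using H H2 by (elim conjE; linarith)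
  next
    case False then show ?thesis using H assms by auto
  qed
qed

lemma (in prob_space) var_sum_indep:
  fixes Y :: "'i \<Rightarrow> 'a \<Rightarrow> real"
  assumes fin: "finite A" and ind: "indep_vars (\<lambda>_. borel) Y A"
    and bnd: "\<And>i \<omega>. i \<in> A \<Longrightarrow> \<bar>Y i \<omega>\<bar> \<le> B"
  shows "variance (\<lambda>\<omega>. \<Sum>i\<in>A. Y i \<omega>) = (\<Sum>i\<in>A. variance (Y i))"
proof -
  have rv[measurable]: "i \<in> A \<Longrightarrow> Y i \<in> borel_measurable M" for i
    using ind unfolding indep_vars_def by auto
  have intY: "i \<in> A \<Longrightarrow> integrable M (Y i)" for i
    by (rule integrable_const_bound[where B=B]) (auto simp: bnd)
  define D where "D i \<omega> = Y i \<omega> - expectation (Y i)" for i \<omega>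
  have rvD[measurable]: "i \<in> A \<Longrightarrow> D i \<in> borel_measurable M" for i
    unfolding D_def by measurable
  have bndD: "i \<in> A \<Longrightarrow> \<bar>D i \<omega>\<bar> \<le> 2*B" for i \<omega>
  proof -
    assume i: "i \<in> A"
    have "\<bar>expectation (Y i)\<bar> \<le> B"
    proof -
      have "\<bar>expectation (Y i)\<bar> \<le> expectation (\<lambda>\<omega>. \<bar>Y i \<omega>\<bar>)"
        by (rule integral_abs_bound)
      also have "\<dots> \<le> expectation (\<lambda>_. B)"
        using i intY bnd by (intro integral_mono) auto
      finally show ?thesis by (simp add: prob_space)
    qed
    then show ?thesis using bnd[OF i, of \<omega>] unfolding D_def by linarith
  qed
  have intD: "i \<in> A \<Longrightarrow> integrable M (D i)" for i
    by (rule integrable_const_bound[where B="2*B"]) (auto simp: bndD)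
  have ED: "i \<in> A \<Longrightarrow> expectation (D i) = 0" for i
    unfolding D_def using intY[of i] by (simp add: prob_space)
  have intDD: "i \<in> A \<Longrightarrow> j \<in> A \<Longrightarrow> integrable M (\<lambda>\<omega>. D i \<omega> * D j \<omega>)" for i j
  proof (rule integrable_const_bound[where B="2*B*(2*B)"])
    assume ij: "i \<in> A" "j \<in> A"
    have B0: "0 \<le> B" using bnd[OF ij(1), of undefined] by linarith
    have "\<bar>D i \<omega>\<bar> * \<bar>D j \<omega>\<bar> \<le> 2*B*(2*B)" for \<omega>
      by (rule mult_mono) (use bndD[OF ij(1)] bndD[OF ij(2)] B0 in auto)
    then show "AE \<omega> in M. norm (D i \<omega> * D j \<omega>) \<le> 2*B*(2*B)" by (simp add: abs_mult)
    show "(\<lambda>\<omega>. D i \<omega> * D j \<omega>) \<in> borel_measurable M" using ij by measurable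
  qed
  have cross: "expectation (\<lambda>\<omega>. D i \<omega> * D j \<omega>) = (if i = j then variance (Y i) else 0)"
    if ij: "i \<in> A" "j \<in> A" for i j
  proof (cases "i = j")
    case True then show ?thesis by (simp add: D_def power2_eq_square)
  next
    case False
    have indD: "indep_vars (\<lambda>_. borel) D {i, j}"
      unfolding D_def
      by (rule indep_vars_compose2[where X=Y and M'="\<lambda>_. borel", OF indep_vars_subset[OF ind]])
         (use ij in auto)
    have "expectation (\<lambda>\<omega>. \<Prod>k\<in>{i,j}. D k \<omega>) = (\<Prod>k\<in>{i,j}. expectation (D k))"
      by (rule indep_vars_lebesgue_integral[OF _ indD]) (use ij intD in auto)
    then show ?thesis using False ij by (simp add: ED)
  qed
  have EY: "expectation (\<lambda>\<omega>. \<Sum>i\<in>A. Y i \<omega>) = (\<Sum>i\<in>A. expectation (Y i))"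
    using intY by (simp add: integral_sum)
  have "variance (\<lambda>\<omega>. \<Sum>i\<in>A. Y i \<omega>) = expectation (\<lambda>\<omega>. (\<Sum>i\<in>A. D i \<omega>)^2)"
    unfolding EY D_def by (simp add: sum_subtractf)
  also have "\<dots> = expectation (\<lambda>\<omega>. \<Sum>i\<in>A. \<Sum>j\<in>A. D i \<omega> * D j \<omega>)"
    by (simp add: power2_eq_square sum_product)
  also have "\<dots> = (\<Sum>i\<in>A. \<Sum>j\<in>A. expectation (\<lambda>\<omega>. D i \<omega> * D j \<omega>))"
    by (simp add: integral_sum intDD integrable_sum)
  also have "\<dots> = (\<Sum>i\<in>A. \<Sum>j\<in>A. if i = j then variance (Y i) else 0)"
    by (intro sum.cong refl cross)
  also have "\<dots> = (\<Sum>i\<in>A. variance (Y i))"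
    using fin by simp
  finally show ?thesis .
qed

lemma (in prob_space) ident_expectation:
  assumes "distr M borel X = distr M borel Y" "X \<in> borel_measurable M" "Y \<in> borel_measurable M"
    and g: "g \<in> borel_measurable borel"
  shows "expectation (\<lambda>\<omega>. g (X \<omega>) :: real) = expectation (\<lambda>\<omega>. g (Y \<omega>))"
proof -
  have "expectation (\<lambda>\<omega>. g (X \<omega>)) = integral\<^sup>L (distr M borel X) g"
    by (rule integral_distr[OF assms(2) g, symmetric])
  also have "\<dots> = integral\<^sup>L (distr M borel Y) g" using assms by simp
  also have "\<dots> = expectation (\<lambda>\<omega>. g (Y \<omega>))"
    by (rule integral_distr[OF assms(3) g])
  finally show ?thesis .
qed

lemma (in prob_space) ident_prob:
  assumes "distr M borel X = distr M borel Y" "X \<in> borel_measurable M" "Y \<in> borel_measurable M"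
    and A: "A \<in> sets borel"
  shows "prob {\<omega>\<in>space M. (X \<omega> :: real) \<in> A} = prob {\<omega>\<in>space M. Y \<omega> \<in> A}"
proof -
  have "prob {\<omega>\<in>space M. X \<omega> \<in> A} = measure (distr M borel X) A"
    using assms by (subst measure_distr) (auto intro: arg_cong[where f="measure M"])
  also have "\<dots> = measure (distr M borel Y) A" using assms by simp
  also have "\<dots> = prob {\<omega>\<in>space M. Y \<omega> \<in> A}"
    using assms by (subst measure_distr) (auto intro: arg_cong[where f="measure M"])
  finally show ?thesis .
qed

lemma real_le_pow2_mult: "j \<ge> 1 \<Longrightarrow> real m \<le> real (j * 2^m)"
proof -
  assume "j \<ge> 1"
  have "m < 2^m" by (rule less_exp)
  also have "2^m \<le> j * 2^m" using \<open>j \<ge> 1\<close> by simp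
  finally have "m \<le> j * 2^m" by simp
  then show ?thesis by (simp only: of_nat_le_iff)
qed

lemma eventually_pow2_ge:
  assumes "j \<ge> 1" shows "eventually (\<lambda>m. x \<le> real (j * 2^m)) sequentially"
proof -
  have "eventually (\<lambda>m. x \<le> real m) sequentially"
    using filterlim_real_sequentially by (simp add: filterlim_at_top)
  then show ?thesis by eventually_elim (rule order_trans[OF _ real_le_pow2_mult[OF assms]])
qed

lemma (in prob_space) slln_sub:
  fixes X :: "nat \<Rightarrow> 'a \<Rightarrow> real" and j :: nat
  assumes meas[measurable]: "\<And>i. X i \<in> borel_measurable M"
    and nonneg: "\<And>i \<omega>. 0 \<le> X i \<omega>"
    and ind: "indep_vars (\<lambda>_. borel) X UNIV"
    and ident: "\<And>i. distr M borel (X i) = distr M borel (X 0)"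
    and int: "integrable M (X 0)"
    and j: "j \<ge> 1"
  shows "AE \<omega> in M. (\<lambda>m. (\<Sum>i<j*2^m. X i \<omega>) / real (j*2^m)) \<longlonglongrightarrow> expectation (X 0)"
proof -
  define n where "n m = j * 2^m" for m
  define k where "k m = real j * 2^m" for m
  have nk: "real (n m) = k m" for m by (simp add: n_def k_def)
  have kpos: "k m > 0" for m using j by (simp add: k_def)
  define T where "T m \<omega> = (\<Sum>i<n m. min (X i \<omega>) (k m))" for m \<omega>
  have Tmeas[measurable]: "T m \<in> borel_measurable M" for m unfolding T_def by measurable
  have idE: "expectation (\<lambda>\<omega>. g (X i \<omega>)) = expectation (\<lambda>\<omega>. g (X 0 \<omega>))"
    if "g \<in> borel_measurable borel" for g :: "real \<Rightarrow> real" and i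
    by (rule ident_expectation[OF ident[of i] meas[of i] meas[of 0] that])
  have intmin: "integrable M (\<lambda>\<omega>. min (X i \<omega>) c)" if "c \<ge> 0" for i c
    by (rule integrable_const_bound[where B=c]) (use that nonneg in auto)
  have intmin2: "integrable M (\<lambda>\<omega>. (min (X i \<omega>) c)^2)" if "c \<ge> 0" for i c
  proof (rule integrable_const_bound[where B="c^2"])
    have "(min (X i \<omega>) c)^2 \<le> c^2" for \<omega>
      using that nonneg[of i \<omega>] by (intro power_mono) auto
    then show "AE x in M. norm ((min (X i x) c)\<^sup>2) \<le> c\<^sup>2" by simp
  qed simp

  text \<open>Step 1a: truncation is eventually exact.\<close>
  define E where "E m = (\<Union>i\<in>{..<n m}. {\<omega>\<in>space M. k m < X i \<omega>})" for m
  have Esets[measurable]: "E m \<in> sets M" for m unfolding E_def by measurable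
  define g1 where "g1 m x = (if k m < x then k m else 0)" for m x
  have g1meas[measurable]: "g1 m \<in> borel_measurable borel" for m unfolding g1_def by measurable
  have int_g1: "integrable M (\<lambda>\<omega>. g1 m (X 0 \<omega>))" for m
    by (rule integrable_const_bound[where B="k m"]) (auto simp: g1_def less_imp_le kpos)
  have probE: "measure M (E m) \<le> expectation (\<lambda>\<omega>. g1 m (X 0 \<omega>))" for m
  proof -
    have "measure M (E m) \<le> (\<Sum>i<n m. prob {\<omega>\<in>space M. k m < X i \<omega>})"
      unfolding E_def by (rule measure_UNION_le) auto
    also have "\<dots> = (\<Sum>i<n m. prob {\<omega>\<in>space M. k m < X 0 \<omega>})"
    proof (rule sum.cong[OF refl])
      fix i show "prob {\<omega>\<in>space M. k m < X i \<omega>} = prob {\<omega>\<in>space M. k m < X 0 \<omega>}"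
        using ident_prob[OF ident[of i] meas[of i] meas[of 0], where A="{k m<..}"] by simp
    qed
    also have "\<dots> = k m * prob {\<omega>\<in>space M. k m < X 0 \<omega>}" by (simp add: nk)
    also have "\<dots> = expectation (\<lambda>\<omega>. g1 m (X 0 \<omega>))"
    proof -
      have "expectation (\<lambda>\<omega>. g1 m (X 0 \<omega>)) = expectation (\<lambda>\<omega>. k m * indicator {\<omega>\<in>space M. k m < X 0 \<omega>} \<omega>)"
        by (rule Bochner_Integration.integral_cong) (auto simp: g1_def indicator_def)
      also have "\<dots> = k m * prob {\<omega>\<in>space M. k m < X 0 \<omega>}"
        by (simp add: Int_absorb2 subset_eq)
      finally show ?thesis by simp
    qed
    finally show ?thesis .
  qed
  have g1bound: "(\<Sum>m<N. g1 m x) \<le> 2 * x" if "x \<ge> 0" for x N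
    unfolding g1_def k_def using geo_bound1[OF that j] .
  have sumE: "summable (\<lambda>m. measure M (E m))"
  proof (rule summable_comparison_test'[where N=0])
    show "summable (\<lambda>m. expectation (\<lambda>\<omega>. g1 m (X 0 \<omega>)))"
    proof (rule summableI_nonneg_bounded[where x="expectation (\<lambda>\<omega>. 2 * X 0 \<omega>)"])
      show "0 \<le> expectation (\<lambda>\<omega>. g1 m (X 0 \<omega>))" for m
        by (rule integral_nonneg_AE) (auto simp: g1_def less_imp_le kpos)
      show "(\<Sum>m<N. expectation (\<lambda>\<omega>. g1 m (X 0 \<omega>))) \<le> expectation (\<lambda>\<omega>. 2 * X 0 \<omega>)" for N
      proof -
        have "(\<Sum>m<N. expectation (\<lambda>\<omega>. g1 m (X 0 \<omega>))) = expectation (\<lambda>\<omega>. \<Sum>m<N. g1 m (X 0 \<omega>))"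
          by (simp add: integral_sum int_g1)
        also have "\<dots> \<le> expectation (\<lambda>\<omega>. 2 * X 0 \<omega>)"
          by (rule integral_mono) (auto intro!: integrable_sum int_g1 int g1bound nonneg)
        finally show ?thesis .
      qed
    qed
  qed (use probE in auto)
  have AE1: "AE \<omega> in M. eventually (\<lambda>m. \<omega> \<in> space M - E m) sequentially"
    by (rule borel_cantelli_AE1) (auto simp: sumE emeasure_eq_measure)

  have EYi: "expectation (\<lambda>\<omega>. min (X i \<omega>) c) = expectation (\<lambda>\<omega>. min (X 0 \<omega>) c)" for i c
    by (rule idE) measurable
  have ET: "expectation (T m) = k m * expectation (\<lambda>\<omega>. min (X 0 \<omega>) (k m))" for m
  proof -
    have "expectation (T m) = (\<Sum>i<n m. expectation (\<lambda>\<omega>. min (X i \<omega>) (k m)))"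
      unfolding T_def using intmin[OF less_imp_le[OF kpos[of m]]] by (simp add: integral_sum)
    also have "\<dots> = (\<Sum>i<n m. expectation (\<lambda>\<omega>. min (X 0 \<omega>) (k m)))"
      by (rule sum.cong[OF refl]) (rule EYi)
    also have "\<dots> = k m * expectation (\<lambda>\<omega>. min (X 0 \<omega>) (k m))"
      by (simp add: nk)
    finally show ?thesis .
  qed
  have VT: "variance (T m) \<le> k m * expectation (\<lambda>\<omega>. (min (X 0 \<omega>) (k m))^2)" for m
  proof -
    have indm: "indep_vars (\<lambda>_. borel) (\<lambda>i \<omega>. min (X i \<omega>) (k m)) {..<n m}"
      by (rule indep_vars_compose2[where Y="\<lambda>i x. min x (k m)", OF indep_vars_subset[OF ind]]) auto
    have "variance (T m) = (\<Sum>i<n m. variance (\<lambda>\<omega>. min (X i \<omega>) (k m)))"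
      unfolding T_def
    proof (rule var_sum_indep[OF _ indm, where B="k m"])
      fix i \<omega> show "\<bar>min (X i \<omega>) (k m)\<bar> \<le> k m"
        using nonneg[of i \<omega>] kpos[of m] by (simp add: min_def)
    qed simp
    also have "\<dots> = k m * variance (\<lambda>\<omega>. min (X 0 \<omega>) (k m))"
    proof -
      have V: "variance (\<lambda>\<omega>. min (X i \<omega>) (k m)) = variance (\<lambda>\<omega>. min (X 0 \<omega>) (k m))" for i
        unfolding EYi[of i] by (rule idE) measurable
      have "(\<Sum>i<n m. variance (\<lambda>\<omega>. min (X i \<omega>) (k m))) = (\<Sum>i<n m. variance (\<lambda>\<omega>. min (X 0 \<omega>) (k m)))"
        by (rule sum.cong[OF refl]) (rule V)
      then show ?thesis by (simp add: nk)
    qed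
    also have "\<dots> \<le> k m * expectation (\<lambda>\<omega>. (min (X 0 \<omega>) (k m))^2)"
    proof -
      have "variance (\<lambda>\<omega>. min (X 0 \<omega>) (k m)) = expectation (\<lambda>\<omega>. (min (X 0 \<omega>) (k m))^2) - (expectation (\<lambda>\<omega>. min (X 0 \<omega>) (k m)))^2"
        by (rule variance_eq) (use intmin intmin2 kpos less_imp_le in blast)+
      then show ?thesis using kpos[of m] by (simp add: mult_left_mono)
    qed
    finally show ?thesis .
  qed
  define g2 where "g2 m x = (if x \<le> k m then x^2 / k m else 0)" for m x
  have g2bound: "(\<Sum>m<N. g2 m x) \<le> 2 * x" if "x \<ge> 0" for x N
    unfolding g2_def k_def using geo_bound2[OF that j] .
  have minsq: "(min x (k m))^2 / k m \<le> g1 m x + g2 m x" if "x \<ge> 0" for x m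
    using kpos[of m] that by (auto simp: g1_def g2_def min_def power2_eq_square)
  define h where "h m = expectation (\<lambda>\<omega>. (min (X 0 \<omega>) (k m))^2 / k m)" for m
  have hsum: "summable h"
  proof (rule summableI_nonneg_bounded[where x="expectation (\<lambda>\<omega>. 4 * X 0 \<omega>)"])
    show "0 \<le> h m" for m unfolding h_def
      by (rule integral_nonneg_AE) (use kpos[of m] in \<open>auto intro!: divide_nonneg_pos\<close>)
    have inth: "integrable M (\<lambda>\<omega>. (min (X 0 \<omega>) (k m))^2 / k m)" for m
      using intmin2[of "k m" 0] kpos[of m] by simp
    show "(\<Sum>m<N. h m) \<le> expectation (\<lambda>\<omega>. 4 * X 0 \<omega>)" for N
    proof -
      have "(\<Sum>m<N. h m) = expectation (\<lambda>\<omega>. \<Sum>m<N. (min (X 0 \<omega>) (k m))^2 / k m)"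
        unfolding h_def by (simp add: integral_sum inth)
      also have "\<dots> \<le> expectation (\<lambda>\<omega>. 4 * X 0 \<omega>)"
      proof (rule integral_mono)
        fix \<omega> assume "\<omega> \<in> space M"
        have "(\<Sum>m<N. (min (X 0 \<omega>) (k m))^2 / k m) \<le> (\<Sum>m<N. g1 m (X 0 \<omega>) + g2 m (X 0 \<omega>))"
          by (rule sum_mono) (rule minsq[OF nonneg])
        also have "\<dots> \<le> 4 * X 0 \<omega>"
          using g1bound[OF nonneg, of 0 \<omega> N] g2bound[OF nonneg, of 0 \<omega> N]
          by (simp add: sum.distrib)
        finally show "(\<Sum>m<N. (min (X 0 \<omega>) (k m))^2 / k m) \<le> 4 * X 0 \<omega>" .
      qed (auto intro!: integrable_sum inth int)
      finally show ?thesis .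
    qed
  qed
  have AE2: "AE \<omega> in M. eventually (\<lambda>m. \<omega> \<in> space M - {\<omega>\<in>space M. \<epsilon> * k m \<le> \<bar>T m \<omega> - expectation (T m)\<bar>}) sequentially"
    if eps: "\<epsilon> > 0" for \<epsilon>
  proof (rule borel_cantelli_AE1)
    show "summable (\<lambda>m. measure M {\<omega>\<in>space M. \<epsilon> * k m \<le> \<bar>T m \<omega> - expectation (T m)\<bar>})"
    proof (rule summable_comparison_test'[where N=0])
      show "summable (\<lambda>m. h m / \<epsilon>^2)" using hsum by (rule summable_divide)
      fix m :: nat
      have "prob {\<omega>\<in>space M. \<epsilon> * k m \<le> \<bar>T m \<omega> - expectation (T m)\<bar>} \<le> variance (T m) / (\<epsilon> * k m)^2"
      proof (rule Chebyshev_inequality)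
        show "integrable M (\<lambda>x. (T m x)\<^sup>2)"
        proof (rule integrable_const_bound[where B="(k m * k m)^2"])
          have Tb: "\<bar>T m \<omega>\<bar> \<le> k m * k m" for \<omega>
          proof -
            have "\<bar>T m \<omega>\<bar> = T m \<omega>" unfolding T_def using nonneg kpos
              by (intro abs_of_nonneg sum_nonneg) (auto simp: less_imp_le)
            also have "\<dots> \<le> (\<Sum>i<n m. k m)" unfolding T_def by (rule sum_mono) simp
            finally show ?thesis by (simp add: nk)
          qed
          have "(T m x)^2 \<le> (k m * k m)^2" for x
            using power_mono[OF Tb[of x] abs_ge_zero, of 2] by simp
          then show "AE x in M. norm ((T m x)\<^sup>2) \<le> (k m * k m)\<^sup>2"
            by simp
        qed simp
      qed (use eps kpos[of m] in auto)
      also have "\<dots> \<le> k m * expectation (\<lambda>\<omega>. (min (X 0 \<omega>) (k m))^2) / (\<epsilon> * k m)^2"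
        by (rule divide_right_mono[OF VT]) simp
      also have "\<dots> = h m / \<epsilon>^2"
      proof -
        have "h m = expectation (\<lambda>\<omega>. (min (X 0 \<omega>) (k m))^2) / k m" unfolding h_def by simp
        then show ?thesis using kpos[of m] eps by (simp add: field_simps power2_eq_square)
      qed
      finally show "norm (measure M {\<omega>\<in>space M. \<epsilon> * k m \<le> \<bar>T m \<omega> - expectation (T m)\<bar>}) \<le> h m / \<epsilon>^2"
        by simp
    qed
  qed (auto simp: emeasure_eq_measure)

  have AE2': "AE \<omega> in M. \<forall>r::nat. eventually (\<lambda>m. \<bar>T m \<omega> - expectation (T m)\<bar> < k m / Suc r) sequentially"
  proof (subst AE_all_countable, intro allI)
    fix r :: nat
    show "AE \<omega> in M. eventually (\<lambda>m. \<bar>T m \<omega> - expectation (T m)\<bar> < k m / Suc r) sequentially"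
    proof -
      have A: "AE \<omega> in M. eventually (\<lambda>m. \<omega> \<in> space M - {\<omega>\<in>space M. 1 / real (Suc r) * k m \<le> \<bar>T m \<omega> - expectation (T m)\<bar>}) sequentially"
        by (rule AE2) simp
      show ?thesis using A
      proof eventually_elim
        case (elim \<omega>)
        show ?case using elim by (rule eventually_mono) (auto simp: not_le)
      qed
    qed
  qed

  have conv_mean: "(\<lambda>m. expectation (\<lambda>\<omega>. min (X 0 \<omega>) (k m))) \<longlonglongrightarrow> expectation (X 0)"
  proof (rule integral_dominated_convergence[where w="X 0"])
    show "AE \<omega> in M. (\<lambda>m. min (X 0 \<omega>) (k m)) \<longlonglongrightarrow> X 0 \<omega>"
    proof (rule AE_I2)
      fix \<omega>
      have "eventually (\<lambda>m. X 0 \<omega> = min (X 0 \<omega>) (k m)) sequentially"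
        using eventually_pow2_ge[OF j, of "X 0 \<omega>"] by eventually_elim (simp add: k_def)
      then show "(\<lambda>m. min (X 0 \<omega>) (k m)) \<longlonglongrightarrow> X 0 \<omega>"
        by (rule Lim_transform_eventually[OF tendsto_const])
    qed
    show "AE \<omega> in M. norm (min (X 0 \<omega>) (k m)) \<le> X 0 \<omega>" for m
      using nonneg kpos[of m] by auto
  qed (auto simp: int)

  show ?thesis
    using AE1 AE2'
  proof eventually_elim
    case (elim \<omega>)
    have eqT: "eventually (\<lambda>m. (T m \<omega> - expectation (T m)) / k m + expectation (\<lambda>\<omega>. min (X 0 \<omega>) (k m))
                 = (\<Sum>i<j*2^m. X i \<omega>) / real (j*2^m)) sequentially"
      using elim(1)
    proof eventually_elim
      case (elim m)
      then have le: "X i \<omega> \<le> k m" if "i < n m" for i using that by (force simp: E_def not_less)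
      have Teq: "T m \<omega> = (\<Sum>i<j*2^m. X i \<omega>)" unfolding T_def using le by (intro sum.cong) (auto simp: n_def)
      have kk: "real (j*2^m) = k m" using nk[of m] by (simp add: n_def)
      have "(T m \<omega> - expectation (T m)) / k m + expectation (\<lambda>\<omega>. min (X 0 \<omega>) (k m)) = T m \<omega> / k m"
        using kpos[of m] by (simp add: ET diff_divide_distrib)
      then show ?case unfolding kk Teq .
    qed
    have lim0: "(\<lambda>m. (T m \<omega> - expectation (T m)) / k m) \<longlonglongrightarrow> 0"
    proof (rule LIMSEQ_I)
      fix r :: real assume "0 < r"
      then obtain q :: nat where q: "inverse (real (Suc q)) < r" using reals_Archimedean by blast
      from elim(2)[rule_format, of q] obtain N where N: "\<And>m. m \<ge> N \<Longrightarrow> \<bar>T m \<omega> - expectation (T m)\<bar> < k m / Suc q"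
        by (auto simp: eventually_sequentially)
      show "\<exists>N. \<forall>m\<ge>N. norm ((T m \<omega> - expectation (T m)) / k m - 0) < r"
      proof (intro exI allI impI)
        fix m assume "m \<ge> N"
        then have "\<bar>T m \<omega> - expectation (T m)\<bar> / k m < 1 / Suc q"
          using N kpos[of m] by (simp add: field_simps)
        then show "norm ((T m \<omega> - expectation (T m)) / k m - 0) < r"
          using q kpos[of m] by (simp add: abs_divide inverse_eq_divide)
      qed
    qed
    show ?case
      using tendsto_add[OF lim0 conv_mean] eqT by (simp add: Lim_transform_eventually)
  qed
qed

lemma dyadic_cover:
  fixes r M :: nat
  assumes "r \<ge> 1" "n \<ge> r * 2^M"
  shows "\<exists>m j. m \<ge> M \<and> r \<le> j \<and> j < 2*r \<and> j * 2^m \<le> n \<and> n < (j+1) * 2^m"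
  using assms(2)
proof (induction n rule: dec_induct)
  case base
  show ?case by (rule exI[of _ M], rule exI[of _ r]) (use assms(1) in auto)
next
  case (step n)
  then obtain m j where mj: "m \<ge> M" "r \<le> j" "j < 2*r" "j * 2^m \<le> n" "n < (j+1) * 2^m" by blast
  show ?case
  proof (cases "Suc n < (j+1) * 2^m")
    case True then show ?thesis using mj by (intro exI[of _ m] exI[of _ j]) auto
  next
    case False
    then have eq: "Suc n = (j+1) * 2^m" using mj by linarith
    show ?thesis
    proof (cases "j + 1 < 2*r")
      case True then show ?thesis using mj eq by (intro exI[of _ m] exI[of _ "j+1"]) auto
    next
      case False
      then have "j + 1 = 2*r" using mj by linarith
      then have "Suc n = r * 2^(Suc m)" using eq by simp
      then show ?thesis using mj assms(1) by (intro exI[of _ "Suc m"] exI[of _ r]) auto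
    qed
  qed
qed

lemma interp_limit:
  fixes s :: "nat \<Rightarrow> real" and \<mu> :: real
  assumes mono: "\<And>a b. a \<le> b \<Longrightarrow> s a \<le> s b" and nonneg: "\<And>n. 0 \<le> s n" and \<mu>0: "\<mu> \<ge> 0"
    and lim: "\<And>j. j \<ge> 1 \<Longrightarrow> (\<lambda>m. s (j*2^m) / real (j*2^m)) \<longlonglongrightarrow> \<mu>"
  shows "(\<lambda>n. s n / real n) \<longlonglongrightarrow> \<mu>"
proof (rule LIMSEQ_I)
  fix \<epsilon> :: real assume \<epsilon>: "0 < \<epsilon>"
  define \<delta> where "\<delta> = \<epsilon> / 2"
  have \<delta>: "\<delta> > 0" "\<epsilon> = 2*\<delta>" using \<epsilon> by (auto simp: \<delta>_def)
  obtain r :: nat where r: "(\<mu> + \<delta>) / \<delta> < real r" using reals_Archimedean2 by blast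
  have r1: "r \<ge> 1"
  proof -
    have "0 \<le> (\<mu> + \<delta>) / \<delta>" using \<delta> \<mu>0 by simp
    then show ?thesis using r by (cases r) auto
  qed
  have rpos: "real r > 0" using r1 by simp
  have rbound: "\<mu> + \<delta> < \<delta> * real r" using r \<delta> by (simp add: field_simps)
  have ev: "eventually (\<lambda>m. \<forall>j\<in>{r..2*r}. \<bar>s (j*2^m) / real (j*2^m) - \<mu>\<bar> < \<delta>) sequentially"
  proof (rule eventually_ball_finite)
    show "\<forall>j\<in>{r..2*r}. eventually (\<lambda>m. \<bar>s (j*2^m) / real (j*2^m) - \<mu>\<bar> < \<delta>) sequentially"
    proof
      fix j assume "j \<in> {r..2*r}"
      then have "j \<ge> 1" using r1 by auto
      from lim[OF this] \<delta>(1) show "eventually (\<lambda>m. \<bar>s (j*2^m) / real (j*2^m) - \<mu>\<bar> < \<delta>) sequentially"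
        by (simp add: tendsto_iff dist_real_def)
    qed
  qed simp
  then obtain M where MM0: "\<forall>m\<ge>M. \<forall>j\<in>{r..2*r}. \<bar>s (j*2^m) / real (j*2^m) - \<mu>\<bar> < \<delta>"
    unfolding eventually_sequentially by blast
  have MM: "\<bar>s (j*2^m) / real (j*2^m) - \<mu>\<bar> < \<delta>" if "m \<ge> M" "j \<in> {r..2*r}" for m j
    using MM0 that by blast
  have bounds: "s (j*2^m) < (\<mu> + \<delta>) * real (j*2^m) \<and> (\<mu> - \<delta>) * real (j*2^m) < s (j*2^m)"
    if "m \<ge> M" "j \<in> {r..2*r}" for m j
  proof -
    have pos: "real (j*2^m) > 0" using that r1 by auto
    have "\<bar>s (j*2^m) / real (j*2^m) - \<mu>\<bar> < \<delta>" by (rule MM[OF that])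
    then have "s (j*2^m) / real (j*2^m) < \<mu> + \<delta>" "\<mu> - \<delta> < s (j*2^m) / real (j*2^m)" by (auto simp: abs_less_iff simp del: of_nat_mult)
    then have "s (j*2^m) < (\<mu> + \<delta>) * real (j*2^m)" "(\<mu> - \<delta>) * real (j*2^m) < s (j*2^m)"
      using pos by (simp_all only: pos_divide_less_eq pos_less_divide_eq)
    then show ?thesis by simp
  qed
  show "\<exists>N. \<forall>n\<ge>N. norm (s n / real n - \<mu>) < \<epsilon>"
  proof (intro exI allI impI)
    fix n assume n: "n \<ge> r * 2^M"
    obtain m j where mj: "m \<ge> M" "r \<le> j" "j < 2*r" "j * 2^m \<le> n" "n < (j+1) * 2^m"
      using dyadic_cover[OF r1 n] by blast
    define p where "p = real (2^m :: nat)"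
    define J where "J = real j"
    define R where "R = real r"
    have p: "p > 0" by (simp add: p_def)
    have JR: "R \<le> J" using mj by (simp add: J_def R_def)
    have R0: "R > 0" using rpos by (simp add: R_def)
    have lo: "J * p \<le> real n" using mj(4) unfolding J_def p_def by (simp only: of_nat_mult[symmetric] of_nat_le_iff)
    have hi0: "real n < real ((j+1)*2^m)" using mj(5) by (simp only: of_nat_less_iff)
    have "real ((j+1)*2^m) = (J+1) * p" by (simp add: J_def p_def algebra_simps)
    then have hi: "real n < (J+1) * p" using hi0 by simp
    have npos: "real n > 0" using lo p JR R0 by (smt (verit) mult_pos_pos)
    have b1: "s (j*2^m) < (\<mu> + \<delta>) * (J * p)" "(\<mu> - \<delta>) * (J * p) < s (j*2^m)"
      using bounds[OF mj(1), of j] mj by (auto simp: J_def p_def)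
    have b2: "s ((j+1)*2^m) < (\<mu> + \<delta>) * ((J+1) * p)"
      using bounds[OF mj(1), of "j+1"] mj \<open>real ((j+1)*2^m) = (J+1) * p\<close> by (simp del: of_nat_mult of_nat_add)
    have sn1: "s n \<le> s ((j+1)*2^m)" using mj by (intro mono) simp
    have sn2: "s (j*2^m) \<le> s n" using mj by (intro mono) simp
    have key: "(J+1) * p * R \<le> real n * (R + 1)"
    proof -
      have "p * R \<le> J * p" using mult_right_mono[OF JR, of p] p by (simp add: mult.commute)
      then have "(J+1) * p * R \<le> J * p * (R+1)" by (simp add: algebra_simps)
      also have "\<dots> \<le> real n * (R+1)" using lo R0 by (intro mult_right_mono) auto
      finally show ?thesis .
    qed
    have key2: "real n * R < J * p * (R + 1)"
    proof -
      have "p * R \<le> J * p" using mult_right_mono[OF JR, of p] p by (simp add: mult.commute)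
      have "real n * R < (J+1) * p * R" using hi R0 by (intro mult_strict_right_mono) auto
      also have "\<dots> \<le> J * p * (R+1)" using \<open>p * R \<le> J * p\<close> by (simp add: algebra_simps)
      finally show ?thesis .
    qed
    have up: "s n < (\<mu> + \<epsilon>) * real n"
    proof -
      have "s n * R < (\<mu> + \<delta>) * ((J+1) * p) * R" using sn1 b2 R0 by (intro mult_strict_right_mono) auto
      also have "\<dots> \<le> (\<mu> + \<delta>) * (real n * (R+1))"
        using key \<mu>0 \<delta> by (simp add: mult.assoc mult_left_mono)
      also have "\<dots> = (\<mu> + \<delta>) * real n * R + (\<mu> + \<delta>) * real n" by (simp add: algebra_simps)
      also have "\<dots> < (\<mu> + \<delta>) * real n * R + \<delta> * R * real n"
        using rbound npos unfolding R_def by simp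
      also have "\<dots> = (\<mu> + \<epsilon>) * real n * R" using \<delta> by (simp add: algebra_simps)
      finally show ?thesis using R0 by simp
    qed
    have down: "(\<mu> - \<epsilon>) * real n < s n"
    proof (cases "\<mu> - \<delta> \<le> 0")
      case True
      then have "(\<mu> - \<epsilon>) * real n < 0" using \<delta> npos by (simp add: mult_neg_pos)
      then show ?thesis using nonneg[of n] by linarith
    next
      case False
      have "(\<mu> - \<epsilon>) * real n * (R+1) = (\<mu> - \<delta>) * real n * R + ((\<mu> - \<delta>) * real n - \<delta> * real n * (R+1))"
        using \<delta> by (simp add: algebra_simps)
      also have "(\<mu> - \<delta>) * real n - \<delta> * real n * (R+1) < 0"
      proof -
        have "\<mu> - \<delta> < \<delta> * (R + 1)" using rbound \<delta> unfolding R_def by (simp add: algebra_simps)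
        then show ?thesis using npos by (simp add: mult.commute mult_strict_left_mono)
      qed
      also have "(\<mu> - \<delta>) * real n * R + 0 < (\<mu> - \<delta>) * (J * p * (R + 1))"
        using key2 False by (simp add: mult.assoc mult_strict_left_mono)
      also have "\<dots> < s (j*2^m) * (R+1)" using b1(2) R0 by (simp add: mult.assoc[symmetric] mult_strict_right_mono)
      also have "\<dots> \<le> s n * (R+1)" using sn2 R0 by (simp add: mult_right_mono)
      finally show ?thesis using R0 by simp
    qed
    have "\<bar>s n / real n - \<mu>\<bar> < \<epsilon>"
      using up down npos by (simp add: abs_less_iff field_simps)
    then show "norm (s n / real n - \<mu>) < \<epsilon>" by simp
  qed
qed

lemma (in prob_space) indep_vars_reindex_inj:
  assumes ind: "indep_vars M' X (h ` I)" and inj: "inj_on h I"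
  shows "indep_vars (\<lambda>i. M' (h i)) (\<lambda>i. X (h i)) I"
proof -
  define F where "F i = {X i -` A \<inter> space M | A. A \<in> sets (M' i)}" for i
  have rv: "\<forall>i\<in>h ` I. random_variable (M' i) (X i)"
    and ev: "\<forall>i\<in>h ` I. F i \<subseteq> events"
    and pr: "\<And>J A. J \<subseteq> h ` I \<Longrightarrow> J \<noteq> {} \<Longrightarrow> finite J \<Longrightarrow> A \<in> Pi J F \<Longrightarrow>
              prob (\<Inter>j\<in>J. A j) = (\<Prod>j\<in>J. prob (A j))"
    using ind unfolding indep_vars_def2 indep_sets_def F_def by blast+
  show ?thesis
    unfolding indep_vars_def2 indep_sets_def
  proof (intro conjI ballI allI impI)
    fix i assume "i \<in> I" then show "random_variable (M' (h i)) (X (h i))" using rv by auto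
  next
    fix i assume "i \<in> I" then show "{X (h i) -` A \<inter> space M |A. A \<in> sets (M' (h i))} \<subseteq> events"
      using ev by (auto simp: F_def)
  next
    fix J A assume J: "J \<subseteq> I" "J \<noteq> {}" "finite J"
      and A: "A \<in> Pi J (\<lambda>i. {X (h i) -` A \<inter> space M |A. A \<in> sets (M' (h i))})"
    have injJ: "inj_on h J" using inj J(1) by (rule inj_on_subset)
    define B where "B x = A (the_inv_into J h x)" for x
    have Bh: "B (h j) = A j" if "j \<in> J" for j
      unfolding B_def using the_inv_into_f_f[OF injJ that] by simp
    have BP: "B \<in> Pi (h ` J) F"
    proof
      fix x assume "x \<in> h ` J"
      then obtain j where j: "j \<in> J" "x = h j" by auto
      then show "B x \<in> F x" using A Bh[OF j(1)] by (auto simp: F_def)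
    qed
    have "prob (\<Inter>x\<in>h ` J. B x) = (\<Prod>x\<in>h ` J. prob (B x))"
      by (rule pr) (use J BP in auto)
    also have "(\<Inter>x\<in>h ` J. B x) = (\<Inter>j\<in>J. A j)" using Bh by auto
    also have "(\<Prod>x\<in>h ` J. prob (B x)) = (\<Prod>j\<in>J. prob (A j))"
      using Bh by (simp add: prod.reindex[OF injJ])
    finally show "prob (\<Inter>j\<in>J. A j) = (\<Prod>j\<in>J. prob (A j))" .
  qed
qed

lemma (in prob_space) slln_nonneg:
  fixes X :: "nat \<Rightarrow> 'a \<Rightarrow> real"
  assumes meas[measurable]: "\<And>i. X i \<in> borel_measurable M"
    and nonneg: "\<And>i \<omega>. 0 \<le> X i \<omega>"
    and ind: "indep_vars (\<lambda>_. borel) X UNIV"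
    and ident: "\<And>i. distr M borel (X i) = distr M borel (X 0)"
    and int: "integrable M (X 0)"
  shows "AE \<omega> in M. (\<lambda>n. (\<Sum>i<n. X i \<omega>) / real n) \<longlonglongrightarrow> expectation (X 0)"
proof -
  have "AE \<omega> in M. \<forall>j. (\<lambda>m. (\<Sum>i<Suc j*2^m. X i \<omega>) / real (Suc j*2^m)) \<longlonglongrightarrow> expectation (X 0)"
    by (subst AE_all_countable) (intro allI slln_sub[OF meas nonneg ind ident int]; simp)
  then show ?thesis
  proof eventually_elim
    case (elim \<omega>)
    show ?case
    proof (rule interp_limit)
      fix a b :: nat assume "a \<le> b"
      then show "(\<Sum>i<a. X i \<omega>) \<le> (\<Sum>i<b. X i \<omega>)"
        by (intro sum_mono2) (auto simp: nonneg)
    next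
      fix n show "0 \<le> (\<Sum>i<n. X i \<omega>)" by (intro sum_nonneg) (simp add: nonneg)
    next
      show "0 \<le> expectation (X 0)" by (rule integral_nonneg_AE) (simp add: nonneg)
    next
      fix j :: nat assume "j \<ge> 1"
      then obtain j' where "j = Suc j'" by (cases j) auto
      then show "(\<lambda>m. (\<Sum>i<j*2^m. X i \<omega>) / real (j*2^m)) \<longlonglongrightarrow> expectation (X 0)"
        using elim by blast
    qed
  qed
qed

lemma Splus_Suc: "Splus I (Suc n) \<omega> = Splus I n \<omega> + ipos (I (Suc n) \<omega>)"
  by (simp add: Splus_def)
lemma Sminus_Suc: "Sminus I (Suc n) \<omega> = Sminus I n \<omega> + ineg (I (Suc n) \<omega>)"
  by (simp add: Sminus_def)

lemma sum_split_ivl: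
  fixes g :: "nat \<Rightarrow> real"
  assumes "a \<le> b"
  shows "(\<Sum>j\<in>{1..b}. g j) = (\<Sum>j\<in>{1..a}. g j) + (\<Sum>j\<in>{a<..b}. g j)"
proof -
  have "{1..b} = {1..a} \<union> {a<..b}" using assms by auto
  moreover have "{1..a} \<inter> {a<..b} = {}" by auto
  ultimately show ?thesis by (simp add: sum.union_disjoint)
qed

lemma Sf_Suc: "Sf I U f (Suc n) \<omega> = Sf I U f n \<omega> + (Cf I U f n \<omega> - real (ineg (I (Suc n) \<omega>)))"
proof -
  have "Splus I n \<omega> \<le> Splus I (Suc n) \<omega>" by (simp add: Splus_Suc)
  then have "(\<Sum>j\<in>{1..Splus I (Suc n) \<omega>}. indicator {0..f} (U j \<omega>) :: real) =
     (\<Sum>j\<in>{1..Splus I n \<omega>}. indicator {0..f} (U j \<omega>)) + (\<Sum>j\<in>{Splus I n \<omega><..Splus I (Suc n) \<omega>}. indicator {0..f} (U j \<omega>))"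
    by (rule sum_split_ivl)
  then show ?thesis
    unfolding Sf_def Cf_def Sminus_Suc by simp
qed

lemma Mf_0: "Mf I U f 0 \<omega> = 0" by (simp add: Mf_def)

lemma Mf_Suc: "Mf I U f (Suc n) \<omega> = min (Mf I U f n \<omega>) (Sf I U f (Suc n) \<omega>)"
proof -
  have "insert 0 ((\<lambda>k. Sf I U f k \<omega>) ` {1..Suc n}) = insert (Sf I U f (Suc n) \<omega>) (insert 0 ((\<lambda>k. Sf I U f k \<omega>) ` {1..n}))"
    by (auto simp: atLeastAtMostSuc_conv)
  then show ?thesis unfolding Mf_def by (simp add: min.commute)
qed

lemma Sf_0: "Sf I U f 0 \<omega> = 0" by (simp add: Sf_def Splus_def Sminus_def)

lemma Lf_eq: "Lf I U f n \<omega> = Sf I U f n \<omega> - Mf I U f n \<omega>"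
proof (induction n)
  case 0 then show ?case by (simp add: Sf_0 Mf_0)
next
  case (Suc n)
  show ?case unfolding Lf.simps Suc Sf_Suc Mf_Suc by (simp add: max_def min_def)
qed

lemma runmin_limit:
  fixes s :: "nat \<Rightarrow> real"
  assumes lim: "(\<lambda>n. s n / real n) \<longlonglongrightarrow> d"
  shows "(\<lambda>n. Min (insert 0 (s ` {1..n})) / real n) \<longlonglongrightarrow> min d 0"
proof (rule LIMSEQ_I)
  fix \<epsilon> :: real assume \<epsilon>: "0 < \<epsilon>"
  define m where "m n = Min (insert 0 (s ` {1..n}))" for n
  have fin: "finite (insert 0 (s ` {1..n}))" for n by simp
  have m_le0: "m n \<le> 0" for n unfolding m_def by (rule Min_le) auto
  have m_les: "m n \<le> s n" if "n \<ge> 1" for n unfolding m_def using that by (intro Min_le) auto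
  from lim \<epsilon> obtain K0 where K0: "\<And>k. k \<ge> K0 \<Longrightarrow> \<bar>s k / real k - d\<bar> < \<epsilon>/2"
    unfolding LIMSEQ_def dist_real_def by (meson half_gt_zero)
  define K where "K = max K0 1"
  have K: "\<And>k. k \<ge> K \<Longrightarrow> \<bar>s k / real k - d\<bar> < \<epsilon>/2" "K \<ge> 1" using K0 by (auto simp: K_def)
  have sk: "s k \<ge> (min d 0 - \<epsilon>/2) * real n" if "K \<le> k" "k \<le> n" for k n
  proof -
    have kpos: "real k > 0" using K(2) that by simp
    have h: "\<bar>s k / real k - d\<bar> < \<epsilon>/2" by (rule K(1)[OF that(1)])
    have "d - \<epsilon>/2 < s k / real k" using abs_less_iff[THEN iffD1, OF h] by linarith
    then have "(d - \<epsilon>/2) * real k < s k" using kpos by (simp add: pos_less_divide_eq)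
    moreover have "(min d 0 - \<epsilon>/2) * real n \<le> (min d 0 - \<epsilon>/2) * real k"
      using that \<epsilon> by (intro mult_left_mono_neg) auto
    moreover have "(min d 0 - \<epsilon>/2) * real k \<le> (d - \<epsilon>/2) * real k"
      using kpos by (intro mult_right_mono) auto
    ultimately show ?thesis by linarith
  qed
  define C where "C = m K"
  have mlow: "m n \<ge> min C ((min d 0 - \<epsilon>/2) * real n)" if "n \<ge> K" for n
  proof -
    have "min C ((min d 0 - \<epsilon>/2) * real n) \<le> x" if x: "x \<in> insert 0 (s ` {1..n})" for x
    proof -
      consider "x = 0" | k where "k \<in> {1..n}" "x = s k" using x by auto
      then show ?thesis
      proof cases
        case 1 then show ?thesis using m_le0[of K] unfolding C_def by linarith
      next
        case (2 k)
        show ?thesis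
        proof (cases "k \<le> K")
          case True
          then have "C \<le> s k" unfolding C_def m_def using 2 by (intro Min_le) auto
          then show ?thesis using 2 by linarith
        next
          case False
          then show ?thesis using sk[of k n] 2 by auto
        qed
      qed
    qed
    then show ?thesis unfolding m_def by (intro Min.boundedI) auto
  qed
  obtain N1 :: nat where N1: "- C / \<epsilon> < real N1" using reals_Archimedean2 by blast
  define N where "N = max K (N1 + 1)"
  show "\<exists>N. \<forall>n\<ge>N. norm (Min (insert 0 (s ` {1..n})) / real n - min d 0) < \<epsilon>"
  proof (intro exI allI impI)
    fix n assume n: "n \<ge> N"
    then have nK: "n \<ge> K" and nN1: "real n > real N1" by (auto simp: N_def)
    have npos: "real n > 0" using nK K(2) by simp
    have up: "m n / real n < min d 0 + \<epsilon>"
    proof -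
      have h: "\<bar>s n / real n - d\<bar> < \<epsilon>/2" by (rule K(1)[OF nK])
      have "s n / real n < d + \<epsilon>" using abs_less_iff[THEN iffD1, OF h] \<epsilon> by linarith
      moreover have "m n / real n \<le> s n / real n" using m_les[of n] nK K(2) npos by (simp add: divide_right_mono)
      moreover have "m n / real n \<le> 0" using m_le0[of n] npos by (simp add: divide_nonpos_pos)
      ultimately show ?thesis using \<epsilon> by linarith
    qed
    have low: "min d 0 - \<epsilon> < m n / real n"
    proof -
      have "C \<le> 0" unfolding C_def by (rule m_le0)
      have "- C / \<epsilon> < real n" using N1 nN1 by linarith
      then have "- C < real n * \<epsilon>" by (simp only: pos_divide_less_eq[OF \<epsilon>])
      then have "- C < \<epsilon> * real n" by (simp only: mult.commute)
      then have "- \<epsilon> * real n < C" by linarith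
      then have "- \<epsilon> < C / real n" by (simp only: pos_less_divide_eq[OF npos])
      then have c1: "min d 0 - \<epsilon> < C / real n" by linarith
      have c2: "min d 0 - \<epsilon> < (min d 0 - \<epsilon>/2) * real n / real n" using npos \<epsilon> by simp
      have "C \<le> m n \<or> (min d 0 - \<epsilon>/2) * real n \<le> m n" using mlow[OF nK] by linarith
      then show ?thesis
      proof
        assume "C \<le> m n"
        then have "C / real n \<le> m n / real n" using npos by (simp add: divide_right_mono)
        then show ?thesis using c1 by linarith
      next
        assume "(min d 0 - \<epsilon>/2) * real n \<le> m n"
        then have "(min d 0 - \<epsilon>/2) \<le> m n / real n" by (simp only: pos_le_divide_eq[OF npos])
        then show ?thesis using \<epsilon> by linarith
      qed
    qed
    show "norm (Min (insert 0 (s ` {1..n})) / real n - min d 0) < \<epsilon>"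
      using up low unfolding m_def by (simp add: abs_less_iff)
  qed
qed

theorem lemma3:
  fixes M :: "'a measure" and I :: "nat \<Rightarrow> 'a \<Rightarrow> int" and U :: "nat \<Rightarrow> 'a \<Rightarrow> real"
    and f :: real
  assumes "prob_space M"
    and I_meas: "\<And>n. I n \<in> measurable M (count_space UNIV)"
    and U_meas: "\<And>j. U j \<in> borel_measurable M"
    and I_ident: "\<And>n. distr M (count_space UNIV) (I n) = distr M (count_space UNIV) (I 0)"
    and U_unif: "\<And>j. j \<ge> 1 \<Longrightarrow> distr M borel (U j) = uniform_measure lborel {0..1::real}"
    and indep: "prob_space.indep_vars M (\<lambda>_. borel)
        (\<lambda>i \<omega>. case i of Inl n \<Rightarrow> real_of_int (I n \<omega>) | Inr j \<Rightarrow> U j \<omega>)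
        (range Inl \<union> Inr ` {1..})"
    and mom: "(\<integral>\<^sup>+\<omega>. ennreal (real (ineg (I 0 \<omega>))) \<partial>M)
              < (\<integral>\<^sup>+\<omega>. ennreal (real (ipos (I 0 \<omega>))) \<partial>M)"
    and fin: "(\<integral>\<^sup>+\<omega>. ennreal (real (ipos (I 0 \<omega>))) \<partial>M) < \<infinity>"
    and f: "f \<in> {0..1}"
  shows "(AE \<omega> in M. (\<lambda>n. Lf I U f n \<omega> / real n) \<longlonglongrightarrow>
            max (f - prob_space.expectation M (\<lambda>\<omega>. real (ineg (I 0 \<omega>)))
                     / prob_space.expectation M (\<lambda>\<omega>. real (ipos (I 0 \<omega>)))) 0
            * prob_space.expectation M (\<lambda>\<omega>. real (ipos (I 0 \<omega>))))
       \<and> (AE \<omega> in M. (\<lambda>n. Mf I U f n \<omega> / real n) \<longlonglongrightarrow>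
            - (- min (f - prob_space.expectation M (\<lambda>\<omega>. real (ineg (I 0 \<omega>)))
                     / prob_space.expectation M (\<lambda>\<omega>. real (ipos (I 0 \<omega>)))) 0)
            * prob_space.expectation M (\<lambda>\<omega>. real (ipos (I 0 \<omega>))))"
proof -
  interpret P: prob_space M by fact
  define Z where "Z i \<omega> = (case i of Inl n \<Rightarrow> real_of_int (I n \<omega>) | Inr j \<Rightarrow> U j \<omega>)" for i \<omega>
  have indZ: "P.indep_vars (\<lambda>_. borel) Z (range Inl \<union> Inr ` {1..})"
    using indep unfolding Z_def by simp
  have Imeas[measurable]: "(\<lambda>\<omega>. g (I n \<omega>)) \<in> borel_measurable M" for g :: "int \<Rightarrow> real" and n
    by (rule measurable_compose[OF I_meas]) simp
  note U_meas[measurable]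

  have indI: "P.indep_vars (\<lambda>_. borel) (\<lambda>i \<omega>. g (I (Suc i) \<omega>)) UNIV" for g :: "int \<Rightarrow> real"
  proof -
    have "P.indep_vars (\<lambda>_. borel) Z ((\<lambda>i. Inl (Suc i)) ` UNIV)"
      by (rule P.indep_vars_subset[OF indZ]) auto
    then have "P.indep_vars (\<lambda>i. borel) (\<lambda>i. Z (Inl (Suc i))) UNIV"
      by (rule P.indep_vars_reindex_inj) (auto simp: inj_on_def)
    then have "P.indep_vars (\<lambda>_. borel) (\<lambda>i \<omega>. (\<lambda>x. g \<lfloor>x\<rfloor>) (Z (Inl (Suc i)) \<omega>)) UNIV"
      by (rule P.indep_vars_compose2) (rule measurable_compose[OF measurable_real_floor], simp)
    then show ?thesis by (simp add: Z_def)
  qed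
  have indU: "P.indep_vars (\<lambda>_. borel) (\<lambda>i \<omega>. indicator {0..f} (U (Suc i) \<omega>) :: real) UNIV"
  proof -
    have "P.indep_vars (\<lambda>_. borel) Z ((\<lambda>i. Inr (Suc i)) ` UNIV)"
      by (rule P.indep_vars_subset[OF indZ]) auto
    then have "P.indep_vars (\<lambda>i. borel) (\<lambda>i. Z (Inr (Suc i))) UNIV"
      by (rule P.indep_vars_reindex_inj) (auto simp: inj_on_def)
    then have "P.indep_vars (\<lambda>_. borel) (\<lambda>i \<omega>. (\<lambda>x. indicator {0..f} x :: real) (Z (Inr (Suc i)) \<omega>)) UNIV"
      by (rule P.indep_vars_compose2) simp
    then show ?thesis by (simp add: Z_def)
  qed

  have distrI: "distr M borel (\<lambda>\<omega>. g (I n \<omega>)) = distr M borel (\<lambda>\<omega>. g (I 0 \<omega>))" for g :: "int \<Rightarrow> real" and n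
  proof -
    have "distr M borel (\<lambda>\<omega>. g (I n \<omega>)) = distr (distr M (count_space UNIV) (I n)) borel g"
      by (subst distr_distr) (auto simp: comp_def I_meas)
    also have "\<dots> = distr (distr M (count_space UNIV) (I 0)) borel g" unfolding I_ident[of n] ..
    also have "\<dots> = distr M borel (\<lambda>\<omega>. g (I 0 \<omega>))"
      by (subst distr_distr) (auto simp: comp_def I_meas)
    finally show ?thesis .
  qed
  have EI: "P.expectation (\<lambda>\<omega>. g (I n \<omega>)) = P.expectation (\<lambda>\<omega>. g (I 0 \<omega>))" for g :: "int \<Rightarrow> real" and n
  proof -
    have "P.expectation (\<lambda>\<omega>. g (I n \<omega>)) = integral\<^sup>L (distr M (count_space UNIV) (I n)) g"
      by (rule integral_distr[symmetric]) (auto simp: I_meas)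
    also have "\<dots> = integral\<^sup>L (distr M (count_space UNIV) (I 0)) g" unfolding I_ident[of n] ..
    also have "\<dots> = P.expectation (\<lambda>\<omega>. g (I 0 \<omega>))"
      by (rule integral_distr) (auto simp: I_meas)
    finally show ?thesis .
  qed
  have intI: "integrable M (\<lambda>\<omega>. g (I n \<omega>)) \<longleftrightarrow> integrable M (\<lambda>\<omega>. g (I 0 \<omega>))" for g :: "int \<Rightarrow> real" and n
  proof -
    have "integrable M (\<lambda>\<omega>. g (I n \<omega>)) \<longleftrightarrow> integrable (distr M (count_space UNIV) (I n)) g"
      by (rule integrable_distr_eq[symmetric]) (auto simp: I_meas)
    also have "\<dots> \<longleftrightarrow> integrable (distr M (count_space UNIV) (I 0)) g" unfolding I_ident[of n] ..
    also have "\<dots> \<longleftrightarrow> integrable M (\<lambda>\<omega>. g (I 0 \<omega>))"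
      by (rule integrable_distr_eq) (auto simp: I_meas)
    finally show ?thesis .
  qed
  have distrU: "distr M borel (\<lambda>\<omega>. indicator {0..f} (U j \<omega>) :: real) = distr (uniform_measure lborel {0..1::real}) borel (indicator {0..f})"
    if "j \<ge> 1" for j
  proof -
    have "distr M borel (\<lambda>\<omega>. indicator {0..f} (U j \<omega>) :: real) = distr (distr M borel (U j)) borel (indicator {0..f})"
      by (subst distr_distr) (auto simp: comp_def)
    then show ?thesis using U_unif[OF that] by simp
  qed
  have EU: "P.expectation (\<lambda>\<omega>. indicator {0..f} (U j \<omega>) :: real) = f" if "j \<ge> 1" for j
  proof -
    have "P.expectation (\<lambda>\<omega>. indicator {0..f} (U j \<omega>) :: real) = integral\<^sup>L (distr M borel (U j)) (indicator {0..f})"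
      by (rule integral_distr[symmetric]) auto
    also have "\<dots> = integral\<^sup>L (uniform_measure lborel {0..1::real}) (indicator {0..f})"
      using U_unif[OF that] by simp
    also have "\<dots> = measure (uniform_measure lborel {0..1::real}) {0..f}"
      by simp
    also have "\<dots> = f" using f by (simp add: Int_absorb1)
    finally show ?thesis .
  qed

  define a where "a = P.expectation (\<lambda>\<omega>. real (ipos (I 0 \<omega>)))"
  define b where "b = P.expectation (\<lambda>\<omega>. real (ineg (I 0 \<omega>)))"
  have intp: "integrable M (\<lambda>\<omega>. real (ipos (I 0 \<omega>)))"
    by (rule integrableI_nonneg) (use fin in auto)
  have intn: "integrable M (\<lambda>\<omega>. real (ineg (I 0 \<omega>)))"
    by (rule integrableI_nonneg) (use fin mom in auto)
  have nnp: "(\<integral>\<^sup>+\<omega>. ennreal (real (ipos (I 0 \<omega>))) \<partial>M) = ennreal a"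
    unfolding a_def by (rule nn_integral_eq_integral[OF intp]) simp
  have nnn: "(\<integral>\<^sup>+\<omega>. ennreal (real (ineg (I 0 \<omega>))) \<partial>M) = ennreal b"
    unfolding b_def by (rule nn_integral_eq_integral[OF intn]) simp
  have b0: "b \<ge> 0" unfolding b_def by (rule integral_nonneg_AE) simp
  have ab: "b < a" using mom unfolding nnp nnn using b0 by (simp add: ennreal_less_iff)
  have a0: "a > 0" using ab b0 by linarith

  have Lp: "AE \<omega> in M. (\<lambda>n. real (Splus I n \<omega>) / real n) \<longlonglongrightarrow> a"
  proof -
    have "AE \<omega> in M. (\<lambda>n. (\<Sum>i<n. real (ipos (I (Suc i) \<omega>))) / real n) \<longlonglongrightarrow> P.expectation (\<lambda>\<omega>. real (ipos (I (Suc 0) \<omega>)))"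
    proof (rule P.slln_nonneg[OF _ _ indI])
      show "integrable M (\<lambda>\<omega>. real (ipos (I (Suc 0) \<omega>)))"
        using intp intI[of "\<lambda>x. real (ipos x)" "Suc 0"] by simp
      fix i show "distr M borel (\<lambda>\<omega>. real (ipos (I (Suc i) \<omega>))) = distr M borel (\<lambda>\<omega>. real (ipos (I (Suc 0) \<omega>)))"
        using distrI[of "\<lambda>x. real (ipos x)" "Suc i"] distrI[of "\<lambda>x. real (ipos x)" "Suc 0"] by simp
    qed auto
    moreover have "P.expectation (\<lambda>\<omega>. real (ipos (I (Suc 0) \<omega>))) = a"
      unfolding a_def by (rule EI)
    moreover have "(\<Sum>i<n. real (ipos (I (Suc i) \<omega>))) = real (Splus I n \<omega>)" for n \<omega>
      by (simp add: Splus_def sum.atLeast1_atMost_eq)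
    ultimately show ?thesis by simp
  qed
  have Ln: "AE \<omega> in M. (\<lambda>n. real (Sminus I n \<omega>) / real n) \<longlonglongrightarrow> b"
  proof -
    have "AE \<omega> in M. (\<lambda>n. (\<Sum>i<n. real (ineg (I (Suc i) \<omega>))) / real n) \<longlonglongrightarrow> P.expectation (\<lambda>\<omega>. real (ineg (I (Suc 0) \<omega>)))"
    proof (rule P.slln_nonneg[OF _ _ indI])
      show "integrable M (\<lambda>\<omega>. real (ineg (I (Suc 0) \<omega>)))"
        using intn intI[of "\<lambda>x. real (ineg x)" "Suc 0"] by simp
      fix i show "distr M borel (\<lambda>\<omega>. real (ineg (I (Suc i) \<omega>))) = distr M borel (\<lambda>\<omega>. real (ineg (I (Suc 0) \<omega>)))"
        using distrI[of "\<lambda>x. real (ineg x)" "Suc i"] distrI[of "\<lambda>x. real (ineg x)" "Suc 0"] by simp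
    qed auto
    moreover have "P.expectation (\<lambda>\<omega>. real (ineg (I (Suc 0) \<omega>))) = b"
      unfolding b_def by (rule EI)
    moreover have "(\<Sum>i<n. real (ineg (I (Suc i) \<omega>))) = real (Sminus I n \<omega>)" for n \<omega>
      by (simp add: Sminus_def sum.atLeast1_atMost_eq)
    ultimately show ?thesis by simp
  qed
  define A where "A N \<omega> = (\<Sum>j\<in>{1..N}. indicator {0..f} (U j \<omega>) :: real)" for N \<omega>
  have Lu: "AE \<omega> in M. (\<lambda>N. A N \<omega> / real N) \<longlonglongrightarrow> f"
  proof -
    have "AE \<omega> in M. (\<lambda>n. (\<Sum>i<n. indicator {0..f} (U (Suc i) \<omega>) :: real) / real n) \<longlonglongrightarrow> P.expectation (\<lambda>\<omega>. indicator {0..f} (U (Suc 0) \<omega>) :: real)"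
    proof (rule P.slln_nonneg[OF _ _ indU])
      fix i show "distr M borel (\<lambda>\<omega>. indicator {0..f} (U (Suc i) \<omega>) :: real) = distr M borel (\<lambda>\<omega>. indicator {0..f} (U (Suc 0) \<omega>))"
        using distrU[of "Suc i"] distrU[of "Suc 0"] by simp
      show "integrable M (\<lambda>\<omega>. indicator {0..f} (U (Suc 0) \<omega>) :: real)"
        by (rule P.integrable_const_bound[where B=1]) auto
    qed auto
    moreover have "(\<Sum>i<n. indicator {0..f} (U (Suc i) \<omega>) :: real) = A n \<omega>" for n \<omega>
      by (simp add: A_def sum.atLeast1_atMost_eq)
    ultimately show ?thesis using EU[of "Suc 0"] by simp
  qed

  define d where "d = f * a - b"
  have Sconv: "AE \<omega> in M. (\<lambda>n. Sf I U f n \<omega> / real n) \<longlonglongrightarrow> d"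
    using Lp Ln Lu
  proof eventually_elim
    case (elim \<omega>)
    have lp: "(\<lambda>n. real (Splus I n \<omega>) / real n) \<longlonglongrightarrow> a" using elim(1) .
    have h1: "LIM n sequentially. real (Splus I n \<omega>) / real n * real n :> at_top"
      by (rule filterlim_tendsto_pos_mult_at_top[OF lp a0 filterlim_real_sequentially])
    have h2: "eventually (\<lambda>n. real (Splus I n \<omega>) / real n * real n = real (Splus I n \<omega>)) sequentially"
      using eventually_gt_at_top[of 0] by eventually_elim simp
    have "LIM n sequentially. real (Splus I n \<omega>) :> at_top"
      using h1 filterlim_cong[OF refl refl h2] by simp
    then have "filterlim (\<lambda>n. Splus I n \<omega>) sequentially sequentially"
      by (simp add: filterlim_sequentially_iff_filterlim_real)
    then have la: "(\<lambda>n. A (Splus I n \<omega>) \<omega> / real (Splus I n \<omega>)) \<longlonglongrightarrow> f"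
      using elim(3) by (rule filterlim_compose[rotated])
    have eq: "Sf I U f n \<omega> / real n = A (Splus I n \<omega>) \<omega> / real (Splus I n \<omega>) * (real (Splus I n \<omega>) / real n) - real (Sminus I n \<omega>) / real n" for n
    proof (cases "Splus I n \<omega> = 0")
      case True then show ?thesis by (simp add: Sf_def A_def diff_divide_distrib)
    next
      case False then show ?thesis by (simp add: Sf_def A_def diff_divide_distrib)
    qed
    have "(\<lambda>n. A (Splus I n \<omega>) \<omega> / real (Splus I n \<omega>) * (real (Splus I n \<omega>) / real n) - real (Sminus I n \<omega>) / real n) \<longlonglongrightarrow> f * a - b"
      by (intro tendsto_intros la lp elim(2))
    then show ?case unfolding eq d_def .
  qed
  have Mconv: "AE \<omega> in M. (\<lambda>n. Mf I U f n \<omega> / real n) \<longlonglongrightarrow> min d 0"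
    using Sconv
  proof eventually_elim
    case (elim \<omega>)
    show ?case unfolding Mf_def by (rule runmin_limit[OF elim])
  qed
  have Lconv: "AE \<omega> in M. (\<lambda>n. Lf I U f n \<omega> / real n) \<longlonglongrightarrow> max d 0"
    using Sconv Mconv
  proof eventually_elim
    case (elim \<omega>)
    have "(\<lambda>n. Sf I U f n \<omega> / real n - Mf I U f n \<omega> / real n) \<longlonglongrightarrow> d - min d 0"
      by (intro tendsto_intros elim)
    moreover have "d - min d 0 = max d 0" by simp
    ultimately show ?case by (simp add: Lf_eq diff_divide_distrib)
  qed
  have e1: "max (f - b / a) 0 * a = max d 0"
    using a0 by (simp add: d_def max_def field_simps)
  have e2: "- (- min (f - b / a) 0) * a = min d 0"
    using a0 by (simp add: d_def min_def field_simps)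
  show ?thesis
    using Lconv Mconv unfolding e1[symmetric] e2[symmetric] a_def b_def by simp
qed

end
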